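(* Let $\tau$ be a continuous distributive triangle function on $\Delta^+$, $\Sigma$ a $\sigma$-ring of subsets of a non-empty set $\Omega$, $\gamma$ a $\tau$-decomposable measure on $\Sigma$ that is continuous from below, and $f:\Omega\to[0,+\infty]$ a measurable function that is $\gamma$-integrable on $E\in\Sigma$. Then there exists a non-decreasing sequence $(f_n)_{n\ge1}$ of functions in $\mathcal{S}_{f,E}$ converging pointwise to $f$ such that $\int_E f\,d\gamma=\lim_{n\to\infty}\int_E f_n\,d\gamma$ (weak limit in $\Delta^+$).
   Context: $\Delta^+$ is the set of functions $F:[-\infty,+\infty]\to[0,1]$ that are non-decreasing, left-continuous on $\mathbb{R}$, with $F(x)=0$ for $x\le0$ and $F(+\infty)=1$, ordered pointwise; $\varepsilon_a(x)=1$ if $x>a$, else $0$. A triangle function is a symmetric, associative map $\tau:\Delta^+\times\Delta^+\to\Delta^+$, non-decreasing in each variable, with identity $\varepsilon_0$; $G\oplus H=\tau(G,H)$, $\bigoplus_{k=1}^nG_k=\tau(G_1,\bigoplus_{k=2}^nG_k)$. For $c\ge0$, $c\odot G=\varepsilon_0$ if $c=0$, $(c\odot G)(x)=G(x/c)$ if $c>0$; $\tau$ is distributive if $c\odot(G\oplus H)=(c\odot G)\oplus(c\odot H)$ for all $c\ge0$, $G,H$. Convergence in $\Delta^+$ is weak convergence ($G_n(x)\to G(x)$ at every continuity point $x\in\mathbb{R}$ of $G$); $\tau$ is continuous if continuous for this convergence. A $\tau$-decomposable measure on a ring $\Sigma$ is $\gamma:\Sigma\to\Delta^+$ with $\gamma_\emptyset=\varepsilon_0$,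 $\gamma_{E\cup F}=\tau(\gamma_E,\gamma_F)$ for disjoint $E,F$; continuous from below means $\gamma_{E_n}\to\gamma_E$ whenever $E_n\subseteq E_{n+1}$, $\bigcup E_n=E$ in $\Sigma$. A simple function is $\sum_{i=1}^nx_i\chi_{E_i}$, $x_i\in[0,\infty)$, $E_i\in\Sigma$ pairwise disjoint, with $\int_E f\,d\gamma=\bigoplus_{i=1}^nx_i\odot\gamma_{E\cap E_i}$. Measurable: pointwise limit of simple functions. $\mathcal{S}_{f,E}$: simple $\mathfrak f$ with $\mathfrak f\le f$ on $E$. $f$ is $\gamma$-integrable on $E$ if some $H\in\Delta^+$ satisfies $\int_E\mathfrak f\,d\gamma\ge H$ for all $\mathfrak f\in\mathcal S_{f,E}$; then $\int_Ef\,d\gamma=\inf\{\int_E\mathfrak f\,d\gamma:\mathfrak f\in\mathcal S_{f,E}\}$ in $(\Delta^+,\le)$ (left-continuous regularization of the pointwise infimum). *)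

theory Defs
  imports Complex_Main "HOL-Library.Extended_Nonnegative_Real"
begin

type_synonym dfun = "ereal \<Rightarrow> real"

definition Delta_plus :: "dfun set" where
  "Delta_plus = {F. (\<forall>x. 0 \<le> F x \<and> F x \<le> 1) \<and> mono F
      \<and> (\<forall>x::real. continuous (at_left x) (\<lambda>t. F (ereal t)))
      \<and> (\<forall>x. x \<le> 0 \<longrightarrow> F x = 0) \<and> F \<infinity> = 1}"

definition eps :: "real \<Rightarrow> dfun" where
  "eps a = (\<lambda>x. if ereal a < x then 1 else 0)"

definition triangle_function :: "(dfun \<Rightarrow> dfun \<Rightarrow> dfun) \<Rightarrow> bool" where
  "triangle_function \<tau> \<longleftrightarrow>
     (\<forall>G\<in>Delta_plus. \<forall>H\<in>Delta_plus. \<tau> G H \<in> Delta_plus)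
   \<and> (\<forall>G\<in>Delta_plus. \<forall>H\<in>Delta_plus. \<tau> G H = \<tau> H G)
   \<and> (\<forall>G\<in>Delta_plus. \<forall>H\<in>Delta_plus. \<forall>K\<in>Delta_plus. \<tau> G (\<tau> H K) = \<tau> (\<tau> G H) K)
   \<and> (\<forall>G1\<in>Delta_plus. \<forall>G2\<in>Delta_plus. \<forall>H\<in>Delta_plus. G1 \<le> G2 \<longrightarrow> \<tau> G1 H \<le> \<tau> G2 H)
   \<and> (\<forall>G1\<in>Delta_plus. \<forall>G2\<in>Delta_plus. \<forall>H\<in>Delta_plus. G1 \<le> G2 \<longrightarrow> \<tau> H G1 \<le> \<tau> H G2)
   \<and> (\<forall>G\<in>Delta_plus. \<tau> G (eps 0) = G)"

definition smul :: "real \<Rightarrow> dfun \<Rightarrow> dfun" where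
  "smul c G = (if c = 0 then eps 0 else (\<lambda>x. G (x / ereal c)))"

definition tau_distributive :: "(dfun \<Rightarrow> dfun \<Rightarrow> dfun) \<Rightarrow> bool" where
  "tau_distributive \<tau> \<longleftrightarrow> (\<forall>c\<ge>0. \<forall>G\<in>Delta_plus. \<forall>H\<in>Delta_plus.
      smul c (\<tau> G H) = \<tau> (smul c G) (smul c H))"

definition weak_conv :: "(nat \<Rightarrow> dfun) \<Rightarrow> dfun \<Rightarrow> bool" where
  "weak_conv Gs G \<longleftrightarrow> (\<forall>x::real. isCont (\<lambda>t. G (ereal t)) x \<longrightarrow>
      (\<lambda>n. Gs n (ereal x)) \<longlonglongrightarrow> G (ereal x))"

definition tau_continuous :: "(dfun \<Rightarrow> dfun \<Rightarrow> dfun) \<Rightarrow> bool" where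
  "tau_continuous \<tau> \<longleftrightarrow> (\<forall>Gs G Hs H. (\<forall>n. Gs n \<in> Delta_plus) \<and> (\<forall>n. Hs n \<in> Delta_plus)
      \<and> G \<in> Delta_plus \<and> H \<in> Delta_plus \<and> weak_conv Gs G \<and> weak_conv Hs H
      \<longrightarrow> weak_conv (\<lambda>n. \<tau> (Gs n) (Hs n)) (\<tau> G H))"

definition sigma_ring :: "'a set \<Rightarrow> 'a set set \<Rightarrow> bool" where
  "sigma_ring Om M \<longleftrightarrow> M \<subseteq> Pow Om \<and> {} \<in> M
     \<and> (\<forall>A\<in>M. \<forall>B\<in>M. A - B \<in> M \<and> A \<union> B \<in> M)
     \<and> (\<forall>A::nat \<Rightarrow> 'a set. range A \<subseteq> M \<longrightarrow> (\<Union>i. A i) \<in> M)"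

definition tau_measure :: "'a set set \<Rightarrow> (dfun \<Rightarrow> dfun \<Rightarrow> dfun) \<Rightarrow> ('a set \<Rightarrow> dfun) \<Rightarrow> bool" where
  "tau_measure M \<tau> \<gamma> \<longleftrightarrow> (\<forall>E\<in>M. \<gamma> E \<in> Delta_plus) \<and> \<gamma> {} = eps 0
     \<and> (\<forall>E\<in>M. \<forall>F\<in>M. E \<inter> F = {} \<longrightarrow> \<gamma> (E \<union> F) = \<tau> (\<gamma> E) (\<gamma> F))"

definition continuous_from_below :: "'a set set \<Rightarrow> ('a set \<Rightarrow> dfun) \<Rightarrow> bool" where
  "continuous_from_below M \<gamma> \<longleftrightarrow> (\<forall>En E. (\<forall>n. En n \<in> M) \<and> incseq En \<and> E \<in> M
      \<and> (\<Union>n. En n) = E \<longrightarrow> weak_conv (\<lambda>n. \<gamma> (En n)) (\<gamma> E))"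

fun oplus_list :: "(dfun \<Rightarrow> dfun \<Rightarrow> dfun) \<Rightarrow> dfun list \<Rightarrow> dfun" where
  "oplus_list \<tau> [] = eps 0"
| "oplus_list \<tau> [G] = G"
| "oplus_list \<tau> (G # H # Gs) = \<tau> G (oplus_list \<tau> (H # Gs))"

text \<open>A representation sum x_i chi_{E_i} of a simple function, as a list of pairs (x_i, E_i).\<close>
definition simple_rep :: "'a set set \<Rightarrow> (real \<times> 'a set) list \<Rightarrow> bool" where
  "simple_rep M r \<longleftrightarrow> (\<forall>i<length r. 0 \<le> fst (r ! i) \<and> snd (r ! i) \<in> M)
     \<and> (\<forall>i<length r. \<forall>j<length r. i \<noteq> j \<longrightarrow> snd (r ! i) \<inter> snd (r ! j) = {})"

definition rep_fun :: "(real \<times> 'a set) list \<Rightarrow> 'a \<Rightarrow> ennreal" where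
  "rep_fun r = (\<lambda>\<omega>. \<Sum>i<length r. ennreal (fst (r ! i)) * indicator (snd (r ! i)) \<omega>)"

definition simple_fun :: "'a set set \<Rightarrow> ('a \<Rightarrow> ennreal) \<Rightarrow> bool" where
  "simple_fun M g \<longleftrightarrow> (\<exists>r. simple_rep M r \<and> g = rep_fun r)"

definition rep_integral :: "(dfun \<Rightarrow> dfun \<Rightarrow> dfun) \<Rightarrow> ('a set \<Rightarrow> dfun) \<Rightarrow> 'a set
    \<Rightarrow> (real \<times> 'a set) list \<Rightarrow> dfun" where
  "rep_integral \<tau> \<gamma> E r = oplus_list \<tau> (map (\<lambda>(x, A). smul x (\<gamma> (E \<inter> A))) r)"

definition simple_integral :: "'a set set \<Rightarrow> (dfun \<Rightarrow> dfun \<Rightarrow> dfun) \<Rightarrow> ('a set \<Rightarrow> dfun)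
    \<Rightarrow> 'a set \<Rightarrow> ('a \<Rightarrow> ennreal) \<Rightarrow> dfun" where
  "simple_integral M \<tau> \<gamma> E g = rep_integral \<tau> \<gamma> E (SOME r. simple_rep M r \<and> g = rep_fun r)"

definition measurable_fun :: "'a set set \<Rightarrow> 'a set \<Rightarrow> ('a \<Rightarrow> ennreal) \<Rightarrow> bool" where
  "measurable_fun M Om f \<longleftrightarrow> (\<exists>s. (\<forall>n. simple_fun M (s n))
      \<and> (\<forall>\<omega>\<in>Om. (\<lambda>n. s n \<omega>) \<longlonglongrightarrow> f \<omega>))"

definition S_set :: "'a set set \<Rightarrow> ('a \<Rightarrow> ennreal) \<Rightarrow> 'a set \<Rightarrow> ('a \<Rightarrow> ennreal) set" where
  "S_set M f E = {g. simple_fun M g \<and> (\<forall>\<omega>\<in>E. g \<omega> \<le> f \<omega>)}"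

definition gamma_integrable :: "'a set set \<Rightarrow> (dfun \<Rightarrow> dfun \<Rightarrow> dfun) \<Rightarrow> ('a set \<Rightarrow> dfun)
    \<Rightarrow> ('a \<Rightarrow> ennreal) \<Rightarrow> 'a set \<Rightarrow> bool" where
  "gamma_integrable M \<tau> \<gamma> f E \<longleftrightarrow>
     (\<exists>H\<in>Delta_plus. \<forall>g\<in>S_set M f E. H \<le> simple_integral M \<tau> \<gamma> E g)"

text \<open>Infimum in (Delta-plus, <=): left-continuous regularization of the pointwise infimum.\<close>
definition Delta_Inf :: "dfun set \<Rightarrow> dfun" where
  "Delta_Inf A = (\<lambda>x. if x = \<infinity> then 1 else if x = -\<infinity> then 0
      else (SUP t\<in>{t::real. ereal t < x}. (INF F\<in>A. F (ereal t))))"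

definition gamma_integral :: "'a set set \<Rightarrow> (dfun \<Rightarrow> dfun \<Rightarrow> dfun) \<Rightarrow> ('a set \<Rightarrow> dfun)
    \<Rightarrow> ('a \<Rightarrow> ennreal) \<Rightarrow> 'a set \<Rightarrow> dfun" where
  "gamma_integral M \<tau> \<gamma> f E = Delta_Inf (simple_integral M \<tau> \<gamma> E ` S_set M f E)"

end

theory Submission
  imports Defs "HOL-Algebra.FiniteProduct" "HOL-Library.Countable"
begin


lemma eps0_in: "eps 0 \<in> Delta_plus"
proof -
  have c: "continuous (at_left x) (\<lambda>t. eps 0 (ereal t))" for x :: real
  proof (cases "x \<le> 0")
    case True
    have "eventually (\<lambda>t. eps 0 (ereal t) = eps 0 (ereal x)) (at_left x)"
      using True unfolding eventually_at_left_field
      by (intro exI[of _ "x - 1"]) (auto simp: eps_def)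
    then show ?thesis unfolding continuous_within
      by (simp add: tendsto_eventually eventually_mono)
  next
    case False
    have "eventually (\<lambda>t. eps 0 (ereal t) = eps 0 (ereal x)) (at_left x)"
      using False unfolding eventually_at_left_field
      by (intro exI[of _ "0"]) (auto simp: eps_def)
    then show ?thesis unfolding continuous_within
      by (simp add: tendsto_eventually eventually_mono)
  qed
  show ?thesis unfolding Delta_plus_def using c
    by (auto simp: eps_def mono_def zero_ereal_def)
qed

lemma DP_le_eps0: "G \<in> Delta_plus \<Longrightarrow> G \<le> eps 0"
  unfolding Delta_plus_def le_fun_def eps_def
  by (auto simp: not_less zero_ereal_def)

lemma DP_bounds: "G \<in> Delta_plus \<Longrightarrow> 0 \<le> G x \<and> G x \<le> 1"
  unfolding Delta_plus_def by auto

lemma DP_mono: "G \<in> Delta_plus \<Longrightarrow> x \<le> y \<Longrightarrow> G x \<le> G y"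
  unfolding Delta_plus_def mono_def by auto

lemma ereal_div_pos_iff: "0 < c \<Longrightarrow> (0 < x / ereal c) = (0 < x)"
  by (cases x) (auto simp: divide_pos_pos zero_less_divide_iff)

lemma ereal_div_le0: "0 < c \<Longrightarrow> x \<le> 0 \<Longrightarrow> x / ereal c \<le> 0"
  by (cases x) (auto simp: divide_nonpos_pos)

lemma smul_eps: "0 \<le> c \<Longrightarrow> smul c (eps 0) = eps 0"
  unfolding smul_def eps_def by (auto simp: ereal_div_pos_iff zero_ereal_def[symmetric])

lemma smul_in:
  assumes c: "0 \<le> c" and G: "G \<in> Delta_plus"
  shows "smul c G \<in> Delta_plus"
proof (cases "c = 0")
  case True then show ?thesis by (simp add: smul_def eps0_in)
next
  case False
  with c have c: "0 < c" by simp
  have lc: "continuous (at_left x) (\<lambda>t. G (ereal t / ereal c))" for x :: real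
  proof -
    have 1: "((\<lambda>s. G (ereal s)) \<longlongrightarrow> G (ereal (x/c))) (at_left (x/c))"
      using G unfolding Delta_plus_def continuous_within by auto
    have 2: "filterlim (\<lambda>t. t/c) (at_left (x/c)) (at_left x)"
      unfolding filterlim_at
    proof
      show "\<forall>\<^sub>F t in at_left x. t / c \<in> {..<x / c} \<and> t / c \<noteq> x / c"
        unfolding eventually_at_left_field using c
        by (intro exI[of _ "x - 1"]) (auto simp: divide_strict_right_mono)
      show "((\<lambda>t. t / c) \<longlongrightarrow> x / c) (at_left x)"
        using c by (intro tendsto_divide tendsto_ident_at tendsto_const) auto
    qed
    have "((\<lambda>t. G (ereal (t/c))) \<longlongrightarrow> G (ereal (x/c))) (at_left x)"
      using filterlim_compose[OF 1 2] by simp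
    moreover have "\<And>t. ereal t / ereal c = ereal (t / c)" using c by simp
    ultimately show ?thesis unfolding continuous_within by simp
  qed
  have inf: "(\<infinity>::ereal) / ereal c = \<infinity>" using c by simp
  show ?thesis using G c lc inf unfolding smul_def Delta_plus_def mono_def
    by (auto simp: ereal_div_le0)
qed

lemma ereal_div_anti: "0 < c \<Longrightarrow> c \<le> c' \<Longrightarrow> 0 \<le> x \<Longrightarrow> x / ereal c' \<le> x / ereal c"
  by (cases x) (auto simp: divide_left_mono)

lemma smul_anti:
  assumes "0 \<le> c" "c \<le> c'" "G \<in> Delta_plus"
  shows "smul c' G \<le> smul c G"
proof (cases "c = 0")
  case True
  then show ?thesis using assms smul_in[of c' G] DP_le_eps0 by (simp add: smul_def)
next
  case False
  then have c: "0 < c" "0 < c'" using assms by auto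
  show ?thesis unfolding le_fun_def smul_def
  proof
    fix x :: ereal
    show "(if c' = 0 then eps 0 else (\<lambda>x. G (x / ereal c'))) x \<le> (if c = 0 then eps 0 else (\<lambda>x. G (x / ereal c))) x"
    proof (cases "0 \<le> x")
      case True then show ?thesis using c assms DP_mono ereal_div_anti by auto
    next
      case False
      then have "x / ereal c' \<le> 0" using c ereal_div_le0 by simp
      then have "G (x / ereal c') = 0" using assms(3) unfolding Delta_plus_def by auto
      then show ?thesis using c DP_bounds[OF assms(3)] by auto
    qed
  qed
qed

lemma smul_monoG: "G \<le> H \<Longrightarrow> smul c G \<le> smul c H"
  unfolding smul_def le_fun_def by auto




definition Dmon :: "(dfun \<Rightarrow> dfun \<Rightarrow> dfun) \<Rightarrow> dfun monoid" where
  "Dmon \<tau> = \<lparr>carrier = Delta_plus, mult = \<tau>, one = eps 0\<rparr>"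

lemma Dmon_simps[simp]: "carrier (Dmon \<tau>) = Delta_plus" "mult (Dmon \<tau>) = \<tau>" "one (Dmon \<tau>) = eps 0"
  by (simp_all add: Dmon_def)

lemma tf_in: assumes "triangle_function \<tau>" "G \<in> Delta_plus" "H \<in> Delta_plus" shows "\<tau> G H \<in> Delta_plus"
proof -
  have "\<forall>G\<in> Delta_plus. \<forall>H\<in> Delta_plus. \<tau> G H \<in> Delta_plus" using assms(1) unfolding triangle_function_def by (elim conjE) assumption
  then show ?thesis using assms by blast
qed
lemma tf_comm: assumes "triangle_function \<tau>" "G \<in> Delta_plus" "H \<in> Delta_plus" shows "\<tau> G H = \<tau> H G"
proof -
  have "\<forall>G\<in> Delta_plus. \<forall>H\<in> Delta_plus. \<tau> G H = \<tau> H G" using assms(1) unfolding triangle_function_def by (elim conjE) assumption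
  then show ?thesis using assms by blast
qed
lemma tf_assoc: assumes "triangle_function \<tau>" "G \<in> Delta_plus" "H \<in> Delta_plus" "K \<in> Delta_plus" shows "\<tau> G (\<tau> H K) = \<tau> (\<tau> G H) K"
proof -
  have "\<forall>G\<in> Delta_plus. \<forall>H\<in> Delta_plus. \<forall>K\<in> Delta_plus. \<tau> G (\<tau> H K) = \<tau> (\<tau> G H) K" using assms(1) unfolding triangle_function_def by (elim conjE) assumption
  then show ?thesis using assms by blast
qed
lemma tf_mono1: assumes "triangle_function \<tau>" "G1 \<in> Delta_plus" "G2 \<in> Delta_plus" "H \<in> Delta_plus" "G1 \<le> G2" shows "\<tau> G1 H \<le> \<tau> G2 H"
proof -
  have "\<forall>G1\<in> Delta_plus. \<forall>G2\<in> Delta_plus. \<forall>H\<in> Delta_plus. G1 \<le> G2 \<longrightarrow> \<tau> G1 H \<le> \<tau> G2 H" using assms(1) unfolding triangle_function_def by (elim conjE) assumption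
  then show ?thesis using assms by blast
qed
lemma tf_mono2: assumes "triangle_function \<tau>" "G1 \<in> Delta_plus" "G2 \<in> Delta_plus" "H \<in> Delta_plus" "G1 \<le> G2" shows "\<tau> H G1 \<le> \<tau> H G2"
proof -
  have "\<forall>G1\<in> Delta_plus. \<forall>G2\<in> Delta_plus. \<forall>H\<in> Delta_plus. G1 \<le> G2 \<longrightarrow> \<tau> H G1 \<le> \<tau> H G2" using assms(1) unfolding triangle_function_def by (elim conjE) assumption
  then show ?thesis using assms by blast
qed
lemma tf_eps: assumes "triangle_function \<tau>" "G \<in> Delta_plus" shows "\<tau> G (eps 0) = G"
proof -
  have "\<forall>G\<in> Delta_plus. \<tau> G (eps 0) = G" using assms(1) unfolding triangle_function_def by (elim conjE) assumption
  then show ?thesis using assms by blast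
qed

lemma comm_monoid_Dmon: "triangle_function \<tau> \<Longrightarrow> comm_monoid (Dmon \<tau>)"
  apply (rule comm_monoidI)
  unfolding Dmon_simps
  subgoal by (rule tf_in)
  subgoal by (rule eps0_in)
  subgoal by (rule tf_assoc[symmetric])
  subgoal by (simp add: tf_comm[OF _ eps0_in] tf_eps)
  subgoal by (rule tf_comm)
  done

locale tset =
  fixes \<tau> :: "dfun \<Rightarrow> dfun \<Rightarrow> dfun" and M :: "'a set set" and Om :: "'a set" and \<gamma> :: "'a set \<Rightarrow> dfun"
  assumes tri: "triangle_function \<tau>" and dist: "tau_distributive \<tau>"
    and sr: "sigma_ring Om M" and tm: "tau_measure M \<tau> \<gamma>"
begin

interpretation D: comm_monoid "Dmon \<tau>" by (rule comm_monoid_Dmon[OF tri])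

abbreviation P where "P \<equiv> finprod (Dmon \<tau>)"

lemma tau_in: "G \<in> Delta_plus \<Longrightarrow> H \<in> Delta_plus \<Longrightarrow> \<tau> G H \<in> Delta_plus"
  using tri by (rule tf_in)

lemma tau_eps: "G \<in> Delta_plus \<Longrightarrow> \<tau> G (eps 0) = G"
  using tri by (rule tf_eps)

lemma tau_mono: "G \<in> Delta_plus \<Longrightarrow> G' \<in> Delta_plus \<Longrightarrow> H \<in> Delta_plus \<Longrightarrow> H' \<in> Delta_plus
   \<Longrightarrow> G \<le> G' \<Longrightarrow> H \<le> H' \<Longrightarrow> \<tau> G H \<le> \<tau> G' H'"
  by (meson tri tf_mono1 tf_mono2 tf_in order_trans)

lemma M_Un: "A \<in> M \<Longrightarrow> B \<in> M \<Longrightarrow> A \<union> B \<in> M"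
  and M_Diff: "A \<in> M \<Longrightarrow> B \<in> M \<Longrightarrow> A - B \<in> M"
  and M_empty: "{} \<in> M"
  and M_sub: "A \<in> M \<Longrightarrow> A \<subseteq> Om"
  using sr unfolding sigma_ring_def by auto

lemma M_Int: "A \<in> M \<Longrightarrow> B \<in> M \<Longrightarrow> A \<inter> B \<in> M"
proof -
  assume "A \<in> M" "B \<in> M"
  then have "A - (A - B) \<in> M" by (intro M_Diff)
  moreover have "A - (A - B) = A \<inter> B" by auto
  ultimately show ?thesis by simp
qed

lemma M_UN: "finite I \<Longrightarrow> (\<And>i. i \<in> I \<Longrightarrow> C i \<in> M) \<Longrightarrow> (\<Union>i\<in>I. C i) \<in> M"
  by (induction I rule: finite_induct) (auto simp: M_empty M_Un)

lemma gam_in: "A \<in> M \<Longrightarrow> \<gamma> A \<in> Delta_plus"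
  using tm unfolding tau_measure_def by auto

lemma gam_empty: "\<gamma> {} = eps 0"
  using tm unfolding tau_measure_def by auto

lemma gam_add: "A \<in> M \<Longrightarrow> B \<in> M \<Longrightarrow> A \<inter> B = {} \<Longrightarrow> \<gamma> (A \<union> B) = \<tau> (\<gamma> A) (\<gamma> B)"
  using tm unfolding tau_measure_def by auto

lemma oplus_list_eq:
  "(\<forall>G\<in>set Gs. G \<in> Delta_plus) \<Longrightarrow> oplus_list \<tau> Gs = P (\<lambda>i. Gs ! i) {..<length Gs}"
proof (induction Gs)
  case Nil then show ?case by simp
next
  case (Cons G Gs)
  have pi: "(\<lambda>i. (G # Gs) ! i) \<in> {..<length (G#Gs)} \<rightarrow> Delta_plus"
    using Cons.prems by (auto simp: nth_Cons split: nat.split)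
  have "P (\<lambda>i. (G # Gs) ! i) {..<length (G#Gs)} = P (\<lambda>i. (G # Gs) ! i) (insert 0 (Suc ` {..<length Gs}))"
    by (simp add: lessThan_Suc_eq_insert_0)
  also have "\<dots> = \<tau> G (P (\<lambda>i. (G # Gs) ! i) (Suc ` {..<length Gs}))"
    using pi Cons.prems by (subst D.finprod_insert) (auto simp: lessThan_Suc_eq_insert_0)
  also have "P (\<lambda>i. (G # Gs) ! i) (Suc ` {..<length Gs}) = P (\<lambda>i. Gs ! i) {..<length Gs}"
    using pi by (subst D.finprod_reindex) (auto simp: lessThan_Suc_eq_insert_0)
  finally have eq: "P (\<lambda>i. (G # Gs) ! i) {..<length (G#Gs)} = \<tau> G (P (\<lambda>i. Gs ! i) {..<length Gs})" .
  show ?case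
  proof (cases Gs)
    case Nil
    have "\<tau> G (eps 0) = G" using Cons.prems tau_eps by auto
    then show ?thesis using eq Nil by simp
  next
    case (Cons H Hs)
    then show ?thesis using eq Cons.IH \<open>\<forall>G\<in>set (G # Gs). G \<in> Delta_plus\<close> by simp
  qed
qed

lemma P_in: "(\<And>i. i \<in> I \<Longrightarrow> F i \<in> Delta_plus) \<Longrightarrow> P F I \<in> Delta_plus"
  using D.finprod_closed[of F I] by auto

lemma P_insert: "finite I \<Longrightarrow> a \<notin> I \<Longrightarrow> (\<And>i. i \<in> insert a I \<Longrightarrow> F i \<in> Delta_plus)
  \<Longrightarrow> P F (insert a I) = \<tau> (F a) (P F I)"
  by (subst D.finprod_insert) auto

lemma P_cong: "(\<And>i. i \<in> I \<Longrightarrow> F i = F' i) \<Longrightarrow> (\<And>i. i \<in> I \<Longrightarrow> F i \<in> Delta_plus) \<Longrightarrow> P F I = P F' I"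
  by (rule D.finprod_cong') auto

lemma gam_UN:
  assumes "finite I" "\<And>i. i \<in> I \<Longrightarrow> C i \<in> M"
    "\<And>i j. i \<in> I \<Longrightarrow> j \<in> I \<Longrightarrow> i \<noteq> j \<Longrightarrow> C i \<inter> C j = {}"
  shows "\<gamma> (\<Union>i\<in>I. C i) = P (\<lambda>i. \<gamma> (C i)) I"
  using assms
proof (induction I rule: finite_induct)
  case empty then show ?case by (simp add: gam_empty)
next
  case (insert a I)
  have "\<gamma> (\<Union>i\<in>insert a I. C i) = \<gamma> (C a \<union> (\<Union>i\<in>I. C i))" by simp
  also have "\<dots> = \<tau> (\<gamma> (C a)) (\<gamma> (\<Union>i\<in>I. C i))"
    using insert by (intro gam_add M_UN) auto
  also have "\<dots> = P (\<lambda>i. \<gamma> (C i)) (insert a I)"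
    using insert by (subst P_insert) (auto simp: gam_in)
  finally show ?case .
qed

lemma P_smul:
  assumes "finite I" "0 \<le> c" "\<And>i. i \<in> I \<Longrightarrow> F i \<in> Delta_plus"
  shows "smul c (P F I) = P (\<lambda>i. smul c (F i)) I"
  using assms
proof (induction I rule: finite_induct)
  case empty then show ?case by (simp add: smul_eps)
next
  case (insert a I)
  have "smul c (P F (insert a I)) = smul c (\<tau> (F a) (P F I))"
    using insert by (simp add: P_insert)
  also have "\<dots> = \<tau> (smul c (F a)) (smul c (P F I))"
    using dist insert P_in[of I F] unfolding tau_distributive_def by auto
  also have "\<dots> = \<tau> (smul c (F a)) (P (\<lambda>i. smul c (F i)) I)"
    using insert by simp
  also have "\<dots> = P (\<lambda>i. smul c (F i)) (insert a I)"
    using insert by (subst P_insert) (auto intro: smul_in)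
  finally show ?case .
qed

lemma P_mono:
  assumes "finite I" "\<And>i. i \<in> I \<Longrightarrow> F i \<in> Delta_plus" "\<And>i. i \<in> I \<Longrightarrow> F' i \<in> Delta_plus"
    "\<And>i. i \<in> I \<Longrightarrow> F i \<le> F' i"
  shows "P F I \<le> P F' I"
  using assms
proof (induction I rule: finite_induct)
  case empty then show ?case by simp
next
  case (insert a I)
  have "P F (insert a I) = \<tau> (F a) (P F I)" using insert by (intro P_insert) auto
  moreover have "P F' (insert a I) = \<tau> (F' a) (P F' I)" using insert by (intro P_insert) auto
  moreover have "\<tau> (F a) (P F I) \<le> \<tau> (F' a) (P F' I)" using insert by (intro tau_mono P_in) auto
  ultimately show ?case by simp
qed

lemma P_swap:
  assumes "finite I" "finite J" "\<And>i j. i \<in> I \<Longrightarrow> j \<in> J \<Longrightarrow> F i j \<in> Delta_plus"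
  shows "P (\<lambda>i. P (\<lambda>j. F i j) J) I = P (\<lambda>j. P (\<lambda>i. F i j) I) J"
  using assms
proof (induction I rule: finite_induct)
  case empty then show ?case by (simp add: D.finprod_one_eqI)
next
  case (insert a I)
  have "P (\<lambda>i. P (\<lambda>j. F i j) J) (insert a I) = \<tau> (P (\<lambda>j. F a j) J) (P (\<lambda>i. P (\<lambda>j. F i j) J) I)"
    using insert by (subst P_insert) (auto intro!: P_in)
  also have "\<dots> = \<tau> (P (\<lambda>j. F a j) J) (P (\<lambda>j. P (\<lambda>i. F i j) I) J)"
    using insert by simp
  also have "\<dots> = P (\<lambda>j. \<tau> (F a j) (P (\<lambda>i. F i j) I)) J"
  proof -
    have h1: "(\<lambda>j. F a j) \<in> J \<rightarrow> carrier (Dmon \<tau>)" using insert by auto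
    have h2: "(\<lambda>j. P (\<lambda>i. F i j) I) \<in> J \<rightarrow> carrier (Dmon \<tau>)" using insert by (auto intro!: P_in)
    show ?thesis using D.finprod_multf[OF h1 h2] by simp
  qed
  also have "\<dots> = P (\<lambda>j. P (\<lambda>i. F i j) (insert a I)) J"
    using insert by (intro P_cong) (auto intro!: P_in tau_in simp: P_insert)
  finally show ?case .
qed

end



definition extA :: "(real \<times> 'a set) list \<Rightarrow> 'a set \<Rightarrow> nat \<Rightarrow> 'a set" where
  "extA r U i = (if i < length r then snd (r ! i) else U - (\<Union>k<length r. snd (r ! k)))"

definition extx :: "(real \<times> 'a set) list \<Rightarrow> nat \<Rightarrow> real" where
  "extx r i = (if i < length r then fst (r ! i) else 0)"

lemma rep_fun_at:
  assumes "simple_rep M r" "i < length r" "\<omega> \<in> snd (r ! i)"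
  shows "rep_fun r \<omega> = ennreal (fst (r ! i))"
proof -
  have z: "\<forall>k\<in>{..<length r} - {i}. ennreal (fst (r ! k)) * indicator (snd (r ! k)) \<omega> = 0"
    using assms unfolding simple_rep_def by (auto simp: indicator_def)
  have "rep_fun r \<omega> = ennreal (fst (r ! i)) * indicator (snd (r ! i)) \<omega>
      + (\<Sum>k\<in>{..<length r} - {i}. ennreal (fst (r ! k)) * indicator (snd (r ! k)) \<omega>)"
    unfolding rep_fun_def using assms(2) by (subst sum.remove[of _ i]) auto
  also have "\<dots> = ennreal (fst (r ! i))" using z assms(3) by simp
  finally show ?thesis .
qed

lemma rep_fun_out:
  assumes "\<And>i. i < length r \<Longrightarrow> \<omega> \<notin> snd (r ! i)"
  shows "rep_fun r \<omega> = 0"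
  unfolding rep_fun_def using assms by (auto intro!: sum.neutral)

context tset
begin

lemma rep_ext:
  assumes r: "simple_rep M r" and U: "U \<in> M" and sub: "(\<Union>k<length r. snd (r ! k)) \<subseteq> U"
  shows "\<And>i. i \<le> length r \<Longrightarrow> extA r U i \<in> M \<and> 0 \<le> extx r i"
    and "\<And>i j. i \<le> length r \<Longrightarrow> j \<le> length r \<Longrightarrow> i \<noteq> j \<Longrightarrow> extA r U i \<inter> extA r U j = {}"
    and "(\<Union>i\<in>{..length r}. extA r U i) = U"
    and "\<And>i \<omega>. i \<le> length r \<Longrightarrow> \<omega> \<in> extA r U i \<Longrightarrow> rep_fun r \<omega> = ennreal (extx r i)"
    and "\<And>\<omega>. \<omega> \<notin> U \<Longrightarrow> rep_fun r \<omega> = 0"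
proof -
  have rM: "\<And>i. i < length r \<Longrightarrow> snd (r ! i) \<in> M \<and> 0 \<le> fst (r ! i)"
    using r unfolding simple_rep_def by auto
  have rD: "\<And>i j. i < length r \<Longrightarrow> j < length r \<Longrightarrow> i \<noteq> j \<Longrightarrow> snd (r ! i) \<inter> snd (r ! j) = {}"
    using r unfolding simple_rep_def by auto
  have UM: "(\<Union>k<length r. snd (r ! k)) \<in> M" using rM by (intro M_UN) auto
  show "\<And>i. i \<le> length r \<Longrightarrow> extA r U i \<in> M \<and> 0 \<le> extx r i"
    using rM UM U by (auto simp: extA_def extx_def intro: M_Diff)
  show "\<And>i j. i \<le> length r \<Longrightarrow> j \<le> length r \<Longrightarrow> i \<noteq> j \<Longrightarrow> extA r U i \<inter> extA r U j = {}"
    using rD by (auto simp: extA_def)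
  show "(\<Union>i\<in>{..length r}. extA r U i) = U"
  proof
    show "(\<Union>i\<in>{..length r}. extA r U i) \<subseteq> U" using sub by (auto simp: extA_def split: if_splits)
    show "U \<subseteq> (\<Union>i\<in>{..length r}. extA r U i)"
    proof
      fix \<omega> assume "\<omega> \<in> U"
      show "\<omega> \<in> (\<Union>i\<in>{..length r}. extA r U i)"
      proof (cases "\<exists>k<length r. \<omega> \<in> snd (r ! k)")
        case True
        then obtain k where "k < length r" "\<omega> \<in> snd (r ! k)" by blast
        then show ?thesis by (intro UN_I[of k]) (auto simp: extA_def)
      next
        case False
        then show ?thesis using \<open>\<omega> \<in> U\<close> by (intro UN_I[of "length r"]) (auto simp: extA_def)
      qed
    qed
  qed
  show "\<And>i \<omega>. i \<le> length r \<Longrightarrow> \<omega> \<in> extA r U i \<Longrightarrow> rep_fun r \<omega> = ennreal (extx r i)"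
  proof -
    fix i \<omega> assume i: "i \<le> length r" and w: "\<omega> \<in> extA r U i"
    show "rep_fun r \<omega> = ennreal (extx r i)"
    proof (cases "i < length r")
      case True
      then show ?thesis using w rep_fun_at[OF r True] by (simp add: extA_def extx_def)
    next
      case False
      then have "\<And>k. k < length r \<Longrightarrow> \<omega> \<notin> snd (r ! k)" using w by (auto simp: extA_def)
      then show ?thesis using False by (simp add: rep_fun_out extx_def)
    qed
  qed
  show "\<And>\<omega>. \<omega> \<notin> U \<Longrightarrow> rep_fun r \<omega> = 0"
    using sub by (intro rep_fun_out) auto
qed

lemma rep_integral_eq:
  assumes r: "simple_rep M r" and E: "E \<in> M"
  shows "rep_integral \<tau> \<gamma> E r = P (\<lambda>i. smul (fst (r ! i)) (\<gamma> (E \<inter> snd (r ! i)))) {..<length r}"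
proof -
  have rM: "\<And>i. i < length r \<Longrightarrow> snd (r ! i) \<in> M \<and> 0 \<le> fst (r ! i)"
    using r unfolding simple_rep_def by auto
  have mem: "\<forall>G\<in>set (map (\<lambda>(x, A). smul x (\<gamma> (E \<inter> A))) r). G \<in> Delta_plus"
  proof
    fix G assume "G \<in> set (map (\<lambda>(x, A). smul x (\<gamma> (E \<inter> A))) r)"
    then obtain i where i: "i < length r" "G = (\<lambda>(x, A). smul x (\<gamma> (E \<inter> A))) (r ! i)"
      by (auto simp: in_set_conv_nth)
    then show "G \<in> Delta_plus" using rM[OF i(1)] E
      by (auto simp: case_prod_beta intro!: smul_in gam_in M_Int)
  qed
  show ?thesis unfolding rep_integral_def
    apply (subst oplus_list_eq[OF mem])
    apply (simp only: length_map)
    apply (rule P_cong)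
    using mem by (auto simp: case_prod_beta)
qed

lemma rep_integral_ext:
  assumes r: "simple_rep M r" and E: "E \<in> M" and U: "U \<in> M" and sub: "(\<Union>k<length r. snd (r ! k)) \<subseteq> U"
  shows "rep_integral \<tau> \<gamma> E r = P (\<lambda>i. smul (extx r i) (\<gamma> (E \<inter> extA r U i))) {..length r}"
proof -
  note ext = rep_ext[OF r U sub]
  have mem: "\<And>i. i \<le> length r \<Longrightarrow> smul (extx r i) (\<gamma> (E \<inter> extA r U i)) \<in> Delta_plus"
    using ext(1) E by (auto intro!: smul_in gam_in M_Int)
  have "P (\<lambda>i. smul (extx r i) (\<gamma> (E \<inter> extA r U i))) {..length r}
     = P (\<lambda>i. smul (extx r i) (\<gamma> (E \<inter> extA r U i))) (insert (length r) {..<length r})"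
    by (simp add: lessThan_Suc_atMost[symmetric] lessThan_Suc)
  also have "\<dots> = \<tau> (smul (extx r (length r)) (\<gamma> (E \<inter> extA r U (length r))))
       (P (\<lambda>i. smul (extx r i) (\<gamma> (E \<inter> extA r U i))) {..<length r})"
    using mem by (intro P_insert) auto
  also have "smul (extx r (length r)) (\<gamma> (E \<inter> extA r U (length r))) = eps 0"
    by (simp add: extx_def smul_def)
  also have "P (\<lambda>i. smul (extx r i) (\<gamma> (E \<inter> extA r U i))) {..<length r}
     = P (\<lambda>i. smul (fst (r ! i)) (\<gamma> (E \<inter> snd (r ! i)))) {..<length r}"
    using E r unfolding simple_rep_def by (intro P_cong) (auto simp: extx_def extA_def intro!: smul_in gam_in M_Int)
  also have "\<dots> = rep_integral \<tau> \<gamma> E r" using rep_integral_eq[OF r E] by simp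
  finally have e: "P (\<lambda>i. smul (extx r i) (\<gamma> (E \<inter> extA r U i))) {..length r} = \<tau> (eps 0) (rep_integral \<tau> \<gamma> E r)" .
  have "rep_integral \<tau> \<gamma> E r \<in> Delta_plus"
    unfolding rep_integral_eq[OF r E] using r E unfolding simple_rep_def
    by (intro P_in smul_in gam_in M_Int) auto
  then show ?thesis using e tf_comm[OF tri eps0_in] tau_eps by simp
qed

lemma compare:
  fixes A B :: "nat \<Rightarrow> 'a set" and x y :: "nat \<Rightarrow> real"
  assumes I: "finite I" and J: "finite J"
    and AM: "\<And>i. i \<in> I \<Longrightarrow> A i \<in> M" and BM: "\<And>j. j \<in> J \<Longrightarrow> B j \<in> M"
    and x: "\<And>i. i \<in> I \<Longrightarrow> 0 \<le> x i" and y: "\<And>j. j \<in> J \<Longrightarrow> 0 \<le> y j"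
    and AD: "\<And>i i'. i \<in> I \<Longrightarrow> i' \<in> I \<Longrightarrow> i \<noteq> i' \<Longrightarrow> A i \<inter> A i' = {}"
    and BD: "\<And>j j'. j \<in> J \<Longrightarrow> j' \<in> J \<Longrightarrow> j \<noteq> j' \<Longrightarrow> B j \<inter> B j' = {}"
    and U: "(\<Union>i\<in>I. A i) = (\<Union>j\<in>J. B j)" and E: "E \<in> M"
    and le: "\<And>i j. i \<in> I \<Longrightarrow> j \<in> J \<Longrightarrow> E \<inter> A i \<inter> B j \<noteq> {} \<Longrightarrow> x i \<le> y j"
  shows "P (\<lambda>j. smul (y j) (\<gamma> (E \<inter> B j))) J \<le> P (\<lambda>i. smul (x i) (\<gamma> (E \<inter> A i))) I"
proof -
  have CM: "\<And>i j. i \<in> I \<Longrightarrow> j \<in> J \<Longrightarrow> E \<inter> A i \<inter> B j \<in> M"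
    using AM BM E by (auto intro!: M_Int)
  have CD: "\<And>i j. i \<in> I \<Longrightarrow> j \<in> J \<Longrightarrow> \<gamma> (E \<inter> A i \<inter> B j) \<in> Delta_plus"
    using CM by (auto intro: gam_in)
  have a: "\<gamma> (E \<inter> A i) = P (\<lambda>j. \<gamma> (E \<inter> A i \<inter> B j)) J" if i: "i \<in> I" for i
  proof -
    have e: "E \<inter> A i = (\<Union>j\<in>J. E \<inter> A i \<inter> B j)" using U i by blast
    have "\<gamma> (\<Union>j\<in>J. E \<inter> A i \<inter> B j) = P (\<lambda>j. \<gamma> (E \<inter> A i \<inter> B j)) J"
      using CM i BD by (intro gam_UN[OF J]) blast+
    then show ?thesis using e by simp
  qed
  have b: "\<gamma> (E \<inter> B j) = P (\<lambda>i. \<gamma> (E \<inter> A i \<inter> B j)) I" if j: "j \<in> J" for j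
  proof -
    have e: "E \<inter> B j = (\<Union>i\<in>I. E \<inter> A i \<inter> B j)" using U j by blast
    have "\<gamma> (\<Union>i\<in>I. E \<inter> A i \<inter> B j) = P (\<lambda>i. \<gamma> (E \<inter> A i \<inter> B j)) I"
      using CM j AD by (intro gam_UN[OF I]) blast+
    then show ?thesis using e by simp
  qed
  have F1: "P (\<lambda>i. smul (x i) (\<gamma> (E \<inter> A i))) I = P (\<lambda>i. P (\<lambda>j. smul (x i) (\<gamma> (E \<inter> A i \<inter> B j))) J) I"
  proof (rule P_cong)
    fix i assume i: "i \<in> I"
    show "smul (x i) (\<gamma> (E \<inter> A i)) = P (\<lambda>j. smul (x i) (\<gamma> (E \<inter> A i \<inter> B j))) J"
      using a[OF i] P_smul[OF J x[OF i], of "\<lambda>j. \<gamma> (E \<inter> A i \<inter> B j)"] CD[OF i] by simp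
    show "smul (x i) (\<gamma> (E \<inter> A i)) \<in> Delta_plus"
      using x[OF i] E AM[OF i] by (intro smul_in gam_in M_Int)
  qed
  have F2: "P (\<lambda>j. smul (y j) (\<gamma> (E \<inter> B j))) J = P (\<lambda>j. P (\<lambda>i. smul (y j) (\<gamma> (E \<inter> A i \<inter> B j))) I) J"
  proof (rule P_cong)
    fix j assume j: "j \<in> J"
    show "smul (y j) (\<gamma> (E \<inter> B j)) = P (\<lambda>i. smul (y j) (\<gamma> (E \<inter> A i \<inter> B j))) I"
      using b[OF j] P_smul[OF I y[OF j], of "\<lambda>i. \<gamma> (E \<inter> A i \<inter> B j)"] CD j by simp
    show "smul (y j) (\<gamma> (E \<inter> B j)) \<in> Delta_plus"
      using y[OF j] E BM[OF j] by (intro smul_in gam_in M_Int)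
  qed
  have F3: "P (\<lambda>j. P (\<lambda>i. smul (y j) (\<gamma> (E \<inter> A i \<inter> B j))) I) J = P (\<lambda>i. P (\<lambda>j. smul (y j) (\<gamma> (E \<inter> A i \<inter> B j))) J) I"
    by (rule P_swap[symmetric, OF I J]) (use y CD in \<open>blast intro: smul_in\<close>)
  have F4: "P (\<lambda>i. P (\<lambda>j. smul (y j) (\<gamma> (E \<inter> A i \<inter> B j))) J) I
      \<le> P (\<lambda>i. P (\<lambda>j. smul (x i) (\<gamma> (E \<inter> A i \<inter> B j))) J) I"
  proof (rule P_mono[OF I])
    fix i assume i: "i \<in> I"
    show "P (\<lambda>j. smul (y j) (\<gamma> (E \<inter> A i \<inter> B j))) J \<in> Delta_plus"
      using y CD i by (blast intro: P_in smul_in)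
    show "P (\<lambda>j. smul (x i) (\<gamma> (E \<inter> A i \<inter> B j))) J \<in> Delta_plus"
      using x CD i by (blast intro: P_in smul_in)
    show "P (\<lambda>j. smul (y j) (\<gamma> (E \<inter> A i \<inter> B j))) J \<le> P (\<lambda>j. smul (x i) (\<gamma> (E \<inter> A i \<inter> B j))) J"
    proof (rule P_mono[OF J])
      fix j assume j: "j \<in> J"
      show "smul (y j) (\<gamma> (E \<inter> A i \<inter> B j)) \<in> Delta_plus" using y j CD i by (blast intro: smul_in)
      show "smul (x i) (\<gamma> (E \<inter> A i \<inter> B j)) \<in> Delta_plus" using x j CD i by (blast intro: smul_in)
      show "smul (y j) (\<gamma> (E \<inter> A i \<inter> B j)) \<le> smul (x i) (\<gamma> (E \<inter> A i \<inter> B j))"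
      proof (cases "E \<inter> A i \<inter> B j = {}")
        case True then show ?thesis using x[OF i] y[OF j] by (simp add: gam_empty smul_eps)
      next
        case False then show ?thesis using le[OF i j] x[OF i] CD[OF i j] by (intro smul_anti) auto
      qed
    qed
  qed
  show ?thesis using F1 F2 F3 F4 by simp
qed

end



lemma some_rep:
  assumes "simple_fun M g"
  shows "simple_rep M (SOME r. simple_rep M r \<and> g = rep_fun r) \<and> g = rep_fun (SOME r. simple_rep M r \<and> g = rep_fun r)"
  using assms unfolding simple_fun_def by (rule someI_ex)

lemma simple_fun_finite:
  fixes I :: "'i set" and x :: "'i \<Rightarrow> real" and A :: "'i \<Rightarrow> 'a set"
  assumes I: "finite I" and x: "\<And>i. i \<in> I \<Longrightarrow> 0 \<le> x i" and A: "\<And>i. i \<in> I \<Longrightarrow> A i \<in> M"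
    and D: "\<And>i j. i \<in> I \<Longrightarrow> j \<in> I \<Longrightarrow> i \<noteq> j \<Longrightarrow> A i \<inter> A j = {}"
  shows "simple_fun M (\<lambda>\<omega>. \<Sum>i\<in>I. ennreal (x i) * indicator (A i) \<omega>)"
proof -
  obtain xs where xs: "set xs = I" "distinct xs" using finite_distinct_list[OF I] by blast
  define r where "r = map (\<lambda>i. (x i, A i)) xs"
  have "simple_rep M r"
    unfolding simple_rep_def r_def
  proof (rule conjI; intro allI impI)
    fix i assume "i < length (map (\<lambda>i. (x i, A i)) xs)"
    then show "0 \<le> fst (map (\<lambda>i. (x i, A i)) xs ! i) \<and> snd (map (\<lambda>i. (x i, A i)) xs ! i) \<in> M"
      using xs x A by auto
  next
    fix i j assume ij: "i < length (map (\<lambda>i. (x i, A i)) xs)" "j < length (map (\<lambda>i. (x i, A i)) xs)" "i \<noteq> j"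
    then have "xs ! i \<noteq> xs ! j" "xs ! i \<in> I" "xs ! j \<in> I"
      using xs nth_eq_iff_index_eq[OF xs(2)] by auto
    then show "snd (map (\<lambda>i. (x i, A i)) xs ! i) \<inter> snd (map (\<lambda>i. (x i, A i)) xs ! j) = {}"
      using D ij by simp
  qed
  moreover have "(\<lambda>\<omega>. \<Sum>i\<in>I. ennreal (x i) * indicator (A i) \<omega>) = rep_fun r"
  proof
    fix \<omega>
    have "(\<Sum>i\<in>I. ennreal (x i) * indicator (A i) \<omega>) = sum_list (map (\<lambda>i. ennreal (x i) * indicator (A i) \<omega>) xs)"
      using xs by (simp add: sum_list_distinct_conv_sum_set)
    also have "\<dots> = (\<Sum>k = 0..<length xs. ennreal (x (xs ! k)) * indicator (A (xs ! k)) \<omega>)"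
      by (simp add: sum_list_sum_nth)
    also have "\<dots> = rep_fun r \<omega>"
      unfolding rep_fun_def r_def by (simp add: atLeast0LessThan)
    finally show "(\<Sum>i\<in>I. ennreal (x i) * indicator (A i) \<omega>) = rep_fun r \<omega>" .
  qed
  ultimately show ?thesis unfolding simple_fun_def by blast
qed

lemma ennreal_max_eq: "ennreal (max a b) = max (ennreal a) (ennreal b)"
proof (cases "a \<le> b")
  case True
  then have "ennreal a \<le> ennreal b" by (rule ennreal_leI)
  then show ?thesis using True by (simp add: max_absorb2)
next
  case False
  then have "ennreal b \<le> ennreal a" by (intro ennreal_leI) simp
  then show ?thesis using False by (simp add: max_absorb1)
qed

context tset
begin

lemma rep_mono:
  assumes r: "simple_rep M r" and r': "simple_rep M r'" and E: "E \<in> M"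
    and le: "\<And>\<omega>. \<omega> \<in> E \<Longrightarrow> rep_fun r \<omega> \<le> rep_fun r' \<omega>"
  shows "rep_integral \<tau> \<gamma> E r' \<le> rep_integral \<tau> \<gamma> E r"
proof -
  define U where "U = (\<Union>k<length r. snd (r ! k)) \<union> (\<Union>k<length r'. snd (r' ! k))"
  have UM: "U \<in> M" unfolding U_def using r r' unfolding simple_rep_def
    by (intro M_Un M_UN) auto
  have s1: "(\<Union>k<length r. snd (r ! k)) \<subseteq> U" and s2: "(\<Union>k<length r'. snd (r' ! k)) \<subseteq> U"
    unfolding U_def by auto
  note e1 = rep_ext[OF r UM s1] and e2 = rep_ext[OF r' UM s2]
  show ?thesis
    unfolding rep_integral_ext[OF r E UM s1] rep_integral_ext[OF r' E UM s2]
  proof (rule compare)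
    show "finite {..length r}" "finite {..length r'}" by auto
    show "\<And>i. i \<in> {..length r} \<Longrightarrow> extA r U i \<in> M" "\<And>i. i \<in> {..length r} \<Longrightarrow> 0 \<le> extx r i"
      using e1(1) by auto
    show "\<And>i. i \<in> {..length r'} \<Longrightarrow> extA r' U i \<in> M" "\<And>i. i \<in> {..length r'} \<Longrightarrow> 0 \<le> extx r' i"
      using e2(1) by auto
    show "\<And>i i'. i \<in> {..length r} \<Longrightarrow> i' \<in> {..length r} \<Longrightarrow> i \<noteq> i' \<Longrightarrow> extA r U i \<inter> extA r U i' = {}"
      using e1(2) by auto
    show "\<And>i i'. i \<in> {..length r'} \<Longrightarrow> i' \<in> {..length r'} \<Longrightarrow> i \<noteq> i' \<Longrightarrow> extA r' U i \<inter> extA r' U i' = {}"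
      using e2(2) by auto
    show "(\<Union>i\<in>{..length r}. extA r U i) = (\<Union>j\<in>{..length r'}. extA r' U j)"
      using e1(3) e2(3) by simp
    show "E \<in> M" by fact
    fix i j assume i: "i \<in> {..length r}" and j: "j \<in> {..length r'}" and ne: "E \<inter> extA r U i \<inter> extA r' U j \<noteq> {}"
    then obtain \<omega> where w: "\<omega> \<in> E" "\<omega> \<in> extA r U i" "\<omega> \<in> extA r' U j" by blast
    have "ennreal (extx r i) \<le> ennreal (extx r' j)"
      using le[OF w(1)] e1(4)[of i \<omega>] e2(4)[of j \<omega>] i j w by simp
    then show "extx r i \<le> extx r' j" using e2(1)[of j] j by simp
  qed
qed

lemma SI_in:
  assumes "simple_fun M g" "E \<in> M"
  shows "simple_integral M \<tau> \<gamma> E g \<in> Delta_plus"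
proof -
  define r where "r = (SOME r. simple_rep M r \<and> g = rep_fun r)"
  have r: "simple_rep M r" using some_rep[OF assms(1)] r_def by simp
  show ?thesis unfolding simple_integral_def r_def[symmetric] rep_integral_eq[OF r assms(2)]
    using r assms(2) unfolding simple_rep_def by (intro P_in smul_in gam_in M_Int) auto
qed

lemma SI_mono:
  assumes g: "simple_fun M g" and h: "simple_fun M h" and E: "E \<in> M"
    and le: "\<And>\<omega>. \<omega> \<in> E \<Longrightarrow> g \<omega> \<le> h \<omega>"
  shows "simple_integral M \<tau> \<gamma> E h \<le> simple_integral M \<tau> \<gamma> E g"
proof -
  define r where "r = (SOME r. simple_rep M r \<and> g = rep_fun r)"
  define r' where "r' = (SOME r. simple_rep M r \<and> h = rep_fun r)"
  have r: "simple_rep M r" "g = rep_fun r" using some_rep[OF g] r_def by simp_all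
  have r': "simple_rep M r'" "h = rep_fun r'" using some_rep[OF h] r'_def by simp_all
  show ?thesis unfolding simple_integral_def r_def[symmetric] r'_def[symmetric]
    using rep_mono[OF r(1) r'(1) E] le r(2) r'(2) by simp
qed

lemma simple_max:
  assumes g: "simple_fun M g" and h: "simple_fun M h"
  shows "simple_fun M (\<lambda>\<omega>. max (g \<omega>) (h \<omega>))"
proof -
  obtain r where r: "simple_rep M r" "g = rep_fun r" using g unfolding simple_fun_def by blast
  obtain r' where r': "simple_rep M r'" "h = rep_fun r'" using h unfolding simple_fun_def by blast
  define U where "U = (\<Union>k<length r. snd (r ! k)) \<union> (\<Union>k<length r'. snd (r' ! k))"
  have UM: "U \<in> M" unfolding U_def using r r' unfolding simple_rep_def
    by (intro M_Un M_UN) auto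
  have s1: "(\<Union>k<length r. snd (r ! k)) \<subseteq> U" and s2: "(\<Union>k<length r'. snd (r' ! k)) \<subseteq> U"
    unfolding U_def by auto
  note e1 = rep_ext[OF r(1) UM s1] and e2 = rep_ext[OF r'(1) UM s2]
  define K where "K = {..length r} \<times> {..length r'}"
  define xx where "xx = (\<lambda>(i, j). max (extx r i) (extx r' j))"
  define AA where "AA = (\<lambda>(i, j). extA r U i \<inter> extA r' U j)"
  have sf: "simple_fun M (\<lambda>\<omega>. \<Sum>k\<in>K. ennreal (xx k) * indicator (AA k) \<omega>)"
  proof (rule simple_fun_finite)
    show "finite K" unfolding K_def by auto
    show "\<And>k. k \<in> K \<Longrightarrow> 0 \<le> xx k" unfolding K_def xx_def using e1(1) by (auto simp: le_max_iff_disj)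
    show "\<And>k. k \<in> K \<Longrightarrow> AA k \<in> M" unfolding K_def AA_def using e1(1) e2(1) by (auto intro: M_Int)
    show "\<And>k k'. k \<in> K \<Longrightarrow> k' \<in> K \<Longrightarrow> k \<noteq> k' \<Longrightarrow> AA k \<inter> AA k' = {}"
      unfolding K_def AA_def using e1(2) e2(2) by fastforce
  qed
  have eq: "(\<lambda>\<omega>. max (g \<omega>) (h \<omega>)) = (\<lambda>\<omega>. \<Sum>k\<in>K. ennreal (xx k) * indicator (AA k) \<omega>)"
  proof
    fix \<omega>
    show "max (g \<omega>) (h \<omega>) = (\<Sum>k\<in>K. ennreal (xx k) * indicator (AA k) \<omega>)"
    proof (cases "\<omega> \<in> U")
      case False
      then have "\<And>k. k \<in> K \<Longrightarrow> \<omega> \<notin> AA k"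
        unfolding K_def AA_def using e1(3) by auto
      then show ?thesis using False e1(5) e2(5) r(2) r'(2) by (simp add: sum.neutral)
    next
      case True
      then obtain i j where i: "i \<le> length r" "\<omega> \<in> extA r U i" and j: "j \<le> length r'" "\<omega> \<in> extA r' U j"
        using e1(3) e2(3) by blast
      have z: "\<forall>k\<in>K - {(i, j)}. ennreal (xx k) * indicator (AA k) \<omega> = 0"
      proof
        fix k assume k: "k \<in> K - {(i, j)}"
        obtain i' j' where k': "k = (i', j')" by force
        have "\<omega> \<notin> AA k" using k k' i j e1(2)[of i i'] e2(2)[of j j'] unfolding K_def AA_def by auto
        then show "ennreal (xx k) * indicator (AA k) \<omega> = 0" by simp
      qed
      have ij: "(i, j) \<in> K" unfolding K_def using i j by auto
      have "(\<Sum>k\<in>K. ennreal (xx k) * indicator (AA k) \<omega>) = ennreal (xx (i, j)) * indicator (AA (i, j)) \<omega>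
         + (\<Sum>k\<in>K - {(i, j)}. ennreal (xx k) * indicator (AA k) \<omega>)"
        using ij by (subst sum.remove[of _ "(i, j)"]) (auto simp: K_def)
      also have "\<dots> = ennreal (xx (i, j)) * indicator (AA (i, j)) \<omega>"
        using sum.neutral[OF z] by simp
      also have "\<dots> = ennreal (max (extx r i) (extx r' j))"
        using i j by (simp add: xx_def AA_def)
      also have "\<dots> = max (g \<omega>) (h \<omega>)"
        using e1(4)[OF i] e2(4)[OF j] r(2) r'(2) by (simp add: ennreal_max_eq)
      finally show ?thesis by simp
    qed
  qed
  show ?thesis using sf eq by simp
qed

lemma simple_restrict:
  assumes g: "simple_fun M g" and E: "E \<in> M"
  shows "simple_fun M (\<lambda>\<omega>. g \<omega> * indicator E \<omega>)"
proof -
  obtain r where r: "simple_rep M r" "g = rep_fun r" using g unfolding simple_fun_def by blast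
  have sf: "simple_fun M (\<lambda>\<omega>. \<Sum>i\<in>{..<length r}. ennreal (fst (r ! i)) * indicator (snd (r ! i) \<inter> E) \<omega>)"
    using r(1) E unfolding simple_rep_def by (intro simple_fun_finite) (auto intro: M_Int)
  have "(\<lambda>\<omega>. g \<omega> * indicator E \<omega>) = (\<lambda>\<omega>. \<Sum>i\<in>{..<length r}. ennreal (fst (r ! i)) * indicator (snd (r ! i) \<inter> E) \<omega>)"
    unfolding r(2) rep_fun_def by (simp add: sum_distrib_right indicator_inter_arith mult.assoc)
  then show ?thesis using sf by simp
qed

lemma simple_const:
  assumes "0 \<le> q" "L \<in> M"
  shows "simple_fun M (\<lambda>\<omega>. ennreal q * indicator L \<omega>)"
  using simple_fun_finite[of "{()}" "\<lambda>_. q" "\<lambda>_. L" M] assms by simp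

lemma simple_zero: "simple_fun M (\<lambda>\<omega>. 0)"
  using simple_fun_finite[of "{}" "\<lambda>_. 0" "\<lambda>_. {}" M] by simp

lemma SI_restrict:
  assumes g: "simple_fun M g" and E: "E \<in> M"
  shows "simple_integral M \<tau> \<gamma> E (\<lambda>\<omega>. g \<omega> * indicator E \<omega>) = simple_integral M \<tau> \<gamma> E g"
  using SI_mono[OF g simple_restrict[OF g E] E] SI_mono[OF simple_restrict[OF g E] g E]
  by (intro order_antisym) (auto simp: indicator_def)

end



context tset
begin

lemma M_cUN: "(\<And>n::nat. C n \<in> M) \<Longrightarrow> (\<Union>n. C n) \<in> M"
  using sr unfolding sigma_ring_def by blast

lemma M_cINT: "(\<And>n::nat. C n \<in> M) \<Longrightarrow> (\<Inter>n. C n) \<in> M"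
proof -
  assume C: "\<And>n::nat. C n \<in> M"
  have "(\<Inter>n. C n) = C 0 - (\<Union>n. C 0 - C n)" by blast
  moreover have "C 0 - (\<Union>n. C 0 - C n) \<in> M" using C by (intro M_Diff M_cUN)
  ultimately show ?thesis by simp
qed

lemma simple_level:
  assumes g: "simple_fun M g" and c: "0 \<le> c"
  shows "{\<omega>. ennreal c < g \<omega>} \<in> M"
proof -
  obtain r where r: "simple_rep M r" "g = rep_fun r" using g unfolding simple_fun_def by blast
  have "{\<omega>. ennreal c < g \<omega>} = (\<Union>i\<in>{i. i < length r \<and> c < fst (r ! i)}. snd (r ! i))"
  proof (rule Set.set_eqI, rule iffI)
    fix \<omega> assume w: "\<omega> \<in> {\<omega>. ennreal c < g \<omega>}"
    show "\<omega> \<in> (\<Union>i\<in>{i. i < length r \<and> c < fst (r ! i)}. snd (r ! i))"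
    proof (cases "\<exists>i<length r. \<omega> \<in> snd (r ! i)")
      case True
      then obtain i where i: "i < length r" "\<omega> \<in> snd (r ! i)" by blast
      then have "g \<omega> = ennreal (fst (r ! i))" using rep_fun_at[OF r(1)] r(2) by simp
      then have "c < fst (r ! i)" using w c by (simp add: ennreal_less_iff)
      then show ?thesis using i by blast
    next
      case False
      have "rep_fun r \<omega> = 0" by (rule rep_fun_out) (use False in auto)
      then have "g \<omega> = 0" using r(2) by simp
      then show ?thesis using w by simp
    qed
  next
    fix \<omega> assume "\<omega> \<in> (\<Union>i\<in>{i. i < length r \<and> c < fst (r ! i)}. snd (r ! i))"
    then obtain i where i: "i < length r" "c < fst (r ! i)" "\<omega> \<in> snd (r ! i)" by blast
    then have "g \<omega> = ennreal (fst (r ! i))" using rep_fun_at[OF r(1)] r(2) by simp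
    then show "\<omega> \<in> {\<omega>. ennreal c < g \<omega>}" using i c by (simp add: ennreal_less_iff)
  qed
  moreover have "(\<Union>i\<in>{i. i < length r \<and> c < fst (r ! i)}. snd (r ! i)) \<in> M"
    using r(1) unfolding simple_rep_def by (intro M_UN) auto
  ultimately show ?thesis by simp
qed

lemma level_f:
  assumes f: "measurable_fun M Om f" and q: "0 \<le> q"
  shows "{\<omega>\<in>Om. ennreal q < f \<omega>} \<in> M"
proof -
  obtain s where s: "\<And>n. simple_fun M (s n)" "\<And>\<omega>. \<omega> \<in> Om \<Longrightarrow> (\<lambda>n. s n \<omega>) \<longlonglongrightarrow> f \<omega>"
    using f unfolding measurable_fun_def by blast
  define c where "c = (\<lambda>k::nat. q + 1 / Suc k)"
  have c0: "\<And>k. 0 \<le> c k" unfolding c_def using q by simp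
  define Z where "Z = (\<Union>k. \<Union>N. \<Inter>n. {\<omega>. ennreal (c k) < s (n + N) \<omega>})"
  have ZM: "Z \<in> M" unfolding Z_def using s(1) c0 by (intro M_cUN M_cINT simple_level)
  have "{\<omega>\<in>Om. ennreal q < f \<omega>} = Z"
  proof (rule Set.set_eqI, rule iffI)
    fix \<omega> assume "\<omega> \<in> {\<omega>\<in>Om. ennreal q < f \<omega>}"
    then have w: "\<omega> \<in> Om" "ennreal q < f \<omega>" by auto
    have "(\<lambda>k. q + inverse (real (Suc k))) \<longlonglongrightarrow> q + 0"
      by (intro tendsto_add tendsto_const LIMSEQ_inverse_real_of_nat)
    then have "(\<lambda>k. ennreal (c k)) \<longlonglongrightarrow> ennreal (q + 0)"
      unfolding c_def by (intro tendsto_ennrealI) (simp add: inverse_eq_divide)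
    then have "eventually (\<lambda>k. ennreal (c k) < f \<omega>) sequentially"
      using w(2) by (intro order_tendstoD(2)) auto
    then obtain k where k: "ennreal (c k) < f \<omega>" by (auto dest: eventually_happens)
    have "eventually (\<lambda>n. ennreal (c k) < s n \<omega>) sequentially"
      using s(2)[OF w(1)] k by (rule order_tendstoD(1))
    then obtain N where N: "\<And>n. n \<ge> N \<Longrightarrow> ennreal (c k) < s n \<omega>" by (auto simp: eventually_sequentially)
    show "\<omega> \<in> Z" unfolding Z_def using N by (intro UN_I[of k] UN_I[of N]) auto
  next
    fix \<omega> assume "\<omega> \<in> Z"
    then obtain k N where kN: "\<And>n. ennreal (c k) < s (n + N) \<omega>" unfolding Z_def by blast
    have "{\<omega>. ennreal (c k) < s (0 + N) \<omega>} \<in> M" using s(1) c0 by (intro simple_level)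
    then have w: "\<omega> \<in> Om" using kN[of 0] M_sub by blast
    have "ennreal (c k) \<le> f \<omega>"
    proof (rule LIMSEQ_le_const[OF s(2)[OF w]])
      show "\<exists>N. \<forall>n\<ge>N. ennreal (c k) \<le> s n \<omega>"
        using kN by (intro exI[of _ N]) (metis le_add_diff_inverse2 less_imp_le)
    qed
    moreover have "ennreal q < ennreal (c k)" unfolding c_def using q by (simp add: ennreal_less_iff)
    ultimately show "\<omega> \<in> {\<omega>\<in>Om. ennreal q < f \<omega>}" using w by auto
  qed
  then show ?thesis using ZM by simp
qed

end



context tset
begin

lemma main:
  assumes f: "measurable_fun M Om f" and E: "E \<in> M"
  shows "\<exists>fs :: nat \<Rightarrow> 'a \<Rightarrow> ennreal. incseq fs \<and> (\<forall>n. fs n \<in> S_set M f E)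
           \<and> (\<forall>\<omega>\<in>Om. (\<lambda>n. fs n \<omega>) \<longlonglongrightarrow> f \<omega>)
           \<and> weak_conv (\<lambda>n. simple_integral M \<tau> \<gamma> E (fs n)) (gamma_integral M \<tau> \<gamma> f E)"
proof -
  define SI where "SI = simple_integral M \<tau> \<gamma> E"
  define S where "S = S_set M f E"
  define I0 where "I0 = (\<lambda>t::real. INF F\<in>SI ` S. F (ereal t))"
  have SIin: "\<And>g. g \<in> S \<Longrightarrow> SI g \<in> Delta_plus"
    unfolding S_def SI_def S_set_def using E by (auto intro: SI_in)
  have Sne: "(\<lambda>\<omega>. 0) \<in> S" unfolding S_def S_set_def using simple_zero by auto
  have SIne: "SI ` S \<noteq> {}" using Sne by auto
  have bdd: "bdd_below ((\<lambda>F. F (ereal t)) ` (SI ` S))" for t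
    using SIin DP_bounds by (intro bdd_belowI[of _ 0]) auto
  have I0_le: "\<And>g t. g \<in> S \<Longrightarrow> I0 t \<le> SI g (ereal t)"
    unfolding I0_def using bdd by (auto intro: cINF_lower)
  have I0_ge0: "\<And>t. 0 \<le> I0 t"
    unfolding I0_def using SIne SIin DP_bounds by (auto intro!: cINF_greatest)
  have I0_le1: "\<And>t. I0 t \<le> 1"
    using I0_le[OF Sne] SIin[OF Sne] DP_bounds by (meson order_trans)
  have I0_mono: "\<And>t t'. t \<le> t' \<Longrightarrow> I0 t \<le> I0 t'"
  proof -
    fix t t' :: real assume tt: "t \<le> t'"
    have e: "I0 t' = (INF F\<in>SI ` S. F (ereal t'))" by (simp add: I0_def)
    show "I0 t \<le> I0 t'" unfolding e
    proof (rule cINF_greatest[OF SIne])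
      fix F assume "F \<in> SI ` S"
      then obtain g where g: "g \<in> S" "F = SI g" by blast
      have "I0 t \<le> F (ereal t)" using I0_le[OF g(1)] g(2) by simp
      also have "\<dots> \<le> F (ereal t')" using g SIin DP_mono tt by simp
      finally show "I0 t \<le> F (ereal t')" .
    qed
  qed
  have ex: "\<exists>g. g \<in> S \<and> SI g (ereal (of_rat (fst p))) < I0 (of_rat (fst p)) + 1 / Suc (snd p)" for p :: "rat \<times> nat"
  proof -
    have "I0 (of_rat (fst p)) < I0 (of_rat (fst p)) + 1 / Suc (snd p)" by simp
    then have "\<exists>F\<in>SI ` S. F (ereal (of_rat (fst p))) < I0 (of_rat (fst p)) + 1 / Suc (snd p)"
      using cINF_less_iff[OF SIne bdd] unfolding I0_def by blast
    then show ?thesis by blast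
  qed
  then obtain G where G: "\<And>p. G p \<in> S" "\<And>p. SI (G p) (ereal (of_rat (fst p))) < I0 (of_rat (fst p)) + 1 / Suc (snd p)"
    by metis
  define en where "en = (\<lambda>n::nat. (from_nat n :: rat \<times> nat))"
  define qq where "qq = (\<lambda>n. max 0 (real_of_rat (fst (en n))))"
  define L where "L = (\<lambda>q::real. {\<omega>\<in>Om. ennreal q < f \<omega>})"
  define pp where "pp = (\<lambda>n \<omega>. ennreal (qq n) * indicator (L (qq n)) \<omega>)"
  define hh where "hh = (\<lambda>n \<omega>. G (en n) \<omega> * indicator E \<omega>)"
  define F where "F = rec_nat (\<lambda>\<omega>. 0) (\<lambda>n Fn \<omega>. max (Fn \<omega>) (max (pp n \<omega>) (hh n \<omega>)))"
  have F0: "F 0 = (\<lambda>\<omega>. 0)" and FS: "\<And>n. F (Suc n) = (\<lambda>\<omega>. max (F n \<omega>) (max (pp n \<omega>) (hh n \<omega>)))"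
    unfolding F_def by simp_all
  have qq0: "\<And>n. 0 \<le> qq n" unfolding qq_def by simp
  have ppS: "\<And>n. simple_fun M (pp n)"
    unfolding pp_def L_def using qq0 by (intro simple_const level_f[OF f])
  have pple: "\<And>n \<omega>. pp n \<omega> \<le> f \<omega>"
    unfolding pp_def L_def by (auto simp: indicator_def less_imp_le)
  have GS: "\<And>p. simple_fun M (G p)" "\<And>p \<omega>. \<omega> \<in> E \<Longrightarrow> G p \<omega> \<le> f \<omega>"
    using G(1) unfolding S_def S_set_def by auto
  have hhS: "\<And>n. simple_fun M (hh n)"
    unfolding hh_def using GS(1) E by (intro simple_restrict)
  have hhle: "\<And>n \<omega>. hh n \<omega> \<le> f \<omega>"
    unfolding hh_def using GS(2) by (auto simp: indicator_def)
  have Fsimple: "\<And>n. simple_fun M (F n)"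
  proof -
    fix n show "simple_fun M (F n)"
      by (induction n) (auto simp: F0 FS simple_zero intro!: simple_max ppS hhS)
  qed
  have Fle: "\<And>n \<omega>. F n \<omega> \<le> f \<omega>"
  proof -
    fix n \<omega> show "F n \<omega> \<le> f \<omega>"
      by (induction n) (auto simp: F0 FS pple hhle)
  qed
  have FinS: "\<And>n. F n \<in> S" unfolding S_def S_set_def using Fsimple Fle by auto
  have Finc: "incseq F"
    by (rule incseq_SucI) (auto simp: FS le_fun_def)
  have Fle': "\<And>n m \<omega>. n \<le> m \<Longrightarrow> F n \<omega> \<le> F m \<omega>"
    using Finc unfolding incseq_def le_fun_def by blast
  have Fpp: "\<And>n \<omega>. pp n \<omega> \<le> F (Suc n) \<omega>" by (simp add: FS le_max_iff_disj)
  have Fhh: "\<And>n \<omega>. hh n \<omega> \<le> F (Suc n) \<omega>" by (simp add: FS le_max_iff_disj)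
  have en_to: "\<And>p. en (to_nat p) = p" unfolding en_def by simp

  have conv: "(\<lambda>n. F n \<omega>) \<longlonglongrightarrow> f \<omega>" if w: "\<omega> \<in> Om" for \<omega>
  proof -
    have inc: "incseq (\<lambda>n. F n \<omega>)" using Fle' unfolding incseq_def by blast
    have "(SUP n. F n \<omega>) = f \<omega>"
    proof (rule order_antisym)
      show "(SUP n. F n \<omega>) \<le> f \<omega>" using Fle by (intro SUP_least) auto
      show "f \<omega> \<le> (SUP n. F n \<omega>)"
      proof (rule dense_le)
        fix y assume y: "y < f \<omega>"
        obtain z where z: "y < z" "z < f \<omega>" using dense[OF y] by blast
        obtain a where a: "0 \<le> a" "y = ennreal a"
          using y by (cases y) auto
        obtain b where b: "0 \<le> b" "z = ennreal b"
          using z by (cases z) auto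
        have ab: "a < b" using z(1) a b by (simp add: ennreal_less_iff)
        obtain \<rho> where \<rho>: "\<rho> \<in> \<rat>" "a < \<rho>" "\<rho> < b" using Rats_dense_in_real[OF ab] by blast
        obtain r0 where r0: "\<rho> = of_rat r0" using \<rho>(1) by (cases rule: Rats_cases) auto
        define n0 where "n0 = to_nat (r0, 0::nat)"
        have q: "qq n0 = \<rho>" unfolding qq_def n0_def en_to using r0 \<rho> a by simp
        have "ennreal \<rho> < ennreal b" using \<rho> a by (subst ennreal_less_iff) auto
        then have "ennreal \<rho> < z" using b(2) by simp
        then have "ennreal \<rho> < f \<omega>" using z(2) by (rule order.strict_trans)
        then have "\<omega> \<in> L (qq n0)" unfolding L_def q using w by simp
        then have "pp n0 \<omega> = ennreal \<rho>" unfolding pp_def q by simp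
        moreover have "F (Suc n0) \<omega> \<le> (SUP n. F n \<omega>)" by (rule SUP_upper) simp
        ultimately have "ennreal \<rho> \<le> (SUP n. F n \<omega>)"
          using Fpp[of n0 \<omega>] by (metis order_trans)
        moreover have "y \<le> ennreal \<rho>" using a \<rho> by simp
        ultimately show "y \<le> (SUP n. F n \<omega>)" by (rule order_trans[rotated])
      qed
    qed
    then show ?thesis using LIMSEQ_SUP[OF inc] by simp
  qed

  define Sn where "Sn = (\<lambda>n. SI (F n))"
  have Sn_in: "\<And>n. Sn n \<in> Delta_plus" unfolding Sn_def using SIin FinS by simp
  have Sn_anti: "\<And>n m. n \<le> m \<Longrightarrow> Sn m \<le> Sn n"
    unfolding Sn_def SI_def using Fsimple E Fle' by (intro SI_mono) auto
  have Sn_low: "\<And>n t. I0 t \<le> Sn n (ereal t)" unfolding Sn_def using I0_le FinS by simp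
  have Sn_rat: "\<exists>N. \<forall>n\<ge>N. Sn n (ereal (of_rat r0)) < I0 (of_rat r0) + e" if e: "0 < e" for r0 e
  proof -
    obtain k where k: "inverse (real (Suc k)) < e" using reals_Archimedean[OF e] by blast
    define n0 where "n0 = to_nat (r0, k)"
    have "\<forall>n\<ge>Suc n0. Sn n (ereal (of_rat r0)) < I0 (of_rat r0) + e"
    proof (intro allI impI)
      fix n assume n: "Suc n0 \<le> n"
      have "Sn n (ereal (of_rat r0)) \<le> Sn (Suc n0) (ereal (of_rat r0))"
        using Sn_anti[OF n] by (simp add: le_fun_def)
      also have "Sn (Suc n0) \<le> SI (hh n0)"
        unfolding Sn_def SI_def using Fsimple hhS E Fhh by (intro SI_mono) auto
      then have "Sn (Suc n0) (ereal (of_rat r0)) \<le> SI (hh n0) (ereal (of_rat r0))" by (simp add: le_fun_def)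
      also have "SI (hh n0) = SI (G (en n0))"
        unfolding SI_def hh_def using GS(1) E by (rule SI_restrict)
      also have "SI (G (en n0)) (ereal (of_rat r0)) < I0 (of_rat r0) + 1 / Suc k"
        using G(2)[of "en n0"] unfolding n0_def en_to by simp
      also have "\<dots> < I0 (of_rat r0) + e" using k by (simp add: inverse_eq_divide)
      finally show "Sn n (ereal (of_rat r0)) < I0 (of_rat r0) + e" .
    qed
    then show ?thesis by blast
  qed

  define J where "J = (\<lambda>s::real. gamma_integral M \<tau> \<gamma> f E (ereal s))"
  have J_eq: "J s = (SUP t\<in>{t. t < s}. I0 t)" for s
  proof -
    have "J s = Delta_Inf (SI ` S) (ereal s)" unfolding J_def gamma_integral_def SI_def S_def ..
    also have "\<dots> = (SUP t\<in>{t. ereal t < ereal s}. (INF F\<in>SI ` S. F (ereal t)))"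
      unfolding Delta_Inf_def by simp
    also have "{t. ereal t < ereal s} = {t. t < s}" by simp
    finally show ?thesis unfolding I0_def by simp
  qed
  have bddJ: "\<And>s. bdd_above (I0 ` {t. t < s})" using I0_le1 by (intro bdd_aboveI[of _ 1]) auto
  have neJ: "{t. t < s} \<noteq> {}" for s :: real
  proof -
    have "s - 1 \<in> {t. t < s}" by simp
    then show ?thesis by blast
  qed
  have J_le: "\<And>s. J s \<le> I0 s" unfolding J_eq using I0_mono neJ by (intro cSUP_least) auto
  have I0_J: "\<And>t s. t < s \<Longrightarrow> I0 t \<le> J s" unfolding J_eq using bddJ by (intro cSUP_upper) auto

  have wc: "weak_conv Sn (gamma_integral M \<tau> \<gamma> f E)"
    unfolding weak_conv_def
  proof (intro allI impI)
    fix x :: real assume cont: "isCont (\<lambda>t. gamma_integral M \<tau> \<gamma> f E (ereal t)) x"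
    then have cJ: "J \<midarrow>x\<rightarrow> J x" unfolding J_def isCont_def by simp
    show "(\<lambda>n. Sn n (ereal x)) \<longlonglongrightarrow> gamma_integral M \<tau> \<gamma> f E (ereal x)"
      unfolding J_def[symmetric, THEN fun_cong] LIMSEQ_iff
      unfolding J_def[symmetric]
    proof (intro allI impI)
      fix r :: real assume r: "0 < r"
      obtain \<delta> where \<delta>: "0 < \<delta>" "\<And>s. s \<noteq> x \<and> norm (s - x) < \<delta> \<Longrightarrow> norm (J s - J x) < r / 2"
      proof -
        have "\<exists>s>0. \<forall>x'. x' \<noteq> x \<and> norm (x' - x) < s \<longrightarrow> norm (J x' - J x) < r / 2"
          using cJ[unfolded LIM_eq, rule_format, of "r/2"] r by simp
        then show ?thesis using that by blast
      qed
      obtain \<rho> where \<rho>: "\<rho> \<in> \<rat>" "x < \<rho>" "\<rho> < x + \<delta> / 2"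
        using Rats_dense_in_real[of x "x + \<delta>/2"] \<delta>(1) by auto
      obtain r0 where r0: "\<rho> = of_rat r0" using \<rho>(1) by (cases rule: Rats_cases) auto
      have "norm (J (x + \<delta>/2) - J x) < r / 2" using \<delta>(2)[of "x + \<delta>/2"] \<delta>(1) by auto
      then have "\<bar>J (x + \<delta>/2) - J x\<bar> < r / 2" by simp
      then have Js: "J (x + \<delta>/2) < J x + r / 2" by arith
      have I0\<rho>: "I0 \<rho> \<le> J (x + \<delta>/2)" using \<rho> by (intro I0_J) auto
      obtain N where N: "\<And>n. n \<ge> N \<Longrightarrow> Sn n (ereal \<rho>) < I0 \<rho> + r / 2"
        using Sn_rat[of "r/2" r0] r r0 by auto
      have "\<forall>n\<ge>N. norm (Sn n (ereal x) - J x) < r"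
      proof (intro allI impI)
        fix n assume n: "N \<le> n"
        have "Sn n (ereal x) \<le> Sn n (ereal \<rho>)" using Sn_in DP_mono \<rho>(2) by simp
        then have up: "Sn n (ereal x) < J x + r" using N[OF n] I0\<rho> Js by linarith
        have lo: "J x \<le> Sn n (ereal x)" using J_le[of x] Sn_low[of x n] by linarith
        show "norm (Sn n (ereal x) - J x) < r" using up lo by simp
      qed
      then show "\<exists>no. \<forall>n\<ge>no. norm (Sn n (ereal x) - J x) < r" by blast
    qed
  qed
  show ?thesis
    using Finc FinS conv wc unfolding Sn_def SI_def S_def by blast
qed

end

theorem theorem5p2:
  fixes \<tau> :: "dfun \<Rightarrow> dfun \<Rightarrow> dfun" and Om :: "'a set" and M :: "'a set set"
    and \<gamma> :: "'a set \<Rightarrow> dfun" and f :: "'a \<Rightarrow> ennreal" and E :: "'a set"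
  assumes "triangle_function \<tau>" and "tau_distributive \<tau>" and "tau_continuous \<tau>"
    and "Om \<noteq> {}" and "sigma_ring Om M"
    and "tau_measure M \<tau> \<gamma>" and "continuous_from_below M \<gamma>"
    and "measurable_fun M Om f" and "E \<in> M" and "gamma_integrable M \<tau> \<gamma> f E"
  shows "\<exists>fs :: nat \<Rightarrow> 'a \<Rightarrow> ennreal. incseq fs \<and> (\<forall>n. fs n \<in> S_set M f E)
           \<and> (\<forall>\<omega>\<in>Om. (\<lambda>n. fs n \<omega>) \<longlonglongrightarrow> f \<omega>)
           \<and> weak_conv (\<lambda>n. simple_integral M \<tau> \<gamma> E (fs n)) (gamma_integral M \<tau> \<gamma> f E)"
proof -
  interpret tset \<tau> M Om \<gamma>
    by (unfold_locales) (fact assms(1), fact assms(2), fact assms(5), fact assms(6))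
  show ?thesis by (rule main) (fact assms(8), fact assms(9))
qed

end
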